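(* Let $E$ be a real Banach space which is uniformly convex with modulus $\delta_E$, and let $d>0$. Let $A\subset E$ be a closed set which is weakly convex with modulus of nonconvexity $\gamma_A(\varepsilon)$, $\varepsilon\in[0,2d)$, with $d\,\delta_E(\varepsilon/d)>\gamma_A(\varepsilon)$ for all $\varepsilon\in(0,2d)$, and suppose condition (i) holds for $\delta(t)=d\,\delta_E(t/d)$ and $\gamma=\gamma_A$. Let $d_1\in(0,d)$. Then for every $x\in E$, the set $A\cap B_{d_1}(x)$, if nonempty, is weakly convex with modulus of nonconvexity $\gamma_{A\cap B_{d_1}(x)}(\varepsilon)\le\gamma_A(\varepsilon)$ for $\varepsilon\in[0,\operatorname{diam}(A\cap B_{d_1}(x)))$, and it is path connected.
   Context: $B_r(a)$ is the closed ball. $\delta_E(\varepsilon)=\sup\{\delta\ge0: B_\delta(\frac{x_1+x_2}{2})\subset B_1(0)\ \forall x_1,x_2\in B_1(0),\ \|x_1-x_2\|=\varepsilon\}$ on $[0,2)$; $E$ uniformly convex means $\delta_E>0$ on $(0,2)$. For a closed set $S$ and $\varepsilon>0$, $\gamma^0_S(\varepsilon)=\inf\{\gamma>0: B_\gamma(\frac{x_1+x_2}{2})\cap S\ne\emptyset\ \forall x_1,x_2\in S,\ \|x_1-x_2\|\le\varepsilon\}$; modulus of nonconvexity $\gamma_S(0)=0$, $\gamma_S(\varepsilon)=\lim_{\tau\downarrow\varepsilon}\gamma^0_S(\tau)$. $S$ is weakly convex with modulus $\gamma_S$ on $[0,d')$ if $\gamma_S(\varepsilon)<\varepsilon/2$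 for $\varepsilon\in(0,d')$. Condition (i) for moduli $\delta,\gamma$: there is $s_0>0$ such that for every $s\in(0,s_0]$: (1) there is $t_s>s$ with $\delta(t_s-s)=\gamma(t_s)$; (2) $t\mapsto\delta(t-s)-\gamma(t)$ is positive and increasing for $t>t_s$; (3) there is $t(s)>t_s$ with $\delta(t(s)-s)-\gamma(t(s))=s/2$. *)

theory Defs
  imports "HOL-Analysis.Analysis"
begin

definition modconv :: "('a::real_normed_vector itself) \<Rightarrow> real \<Rightarrow> real" where
  "modconv _ \<epsilon> = Sup {\<delta>. \<delta> \<ge> 0 \<and>
     (\<forall>x1 x2::'a. x1 \<in> cball 0 1 \<longrightarrow> x2 \<in> cball 0 1 \<longrightarrow> norm (x1 - x2) = \<epsilon> \<longrightarrow>
        cball (midpoint x1 x2) \<delta> \<subseteq> cball 0 1)}"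

definition uniformly_convex_space :: "('a::real_normed_vector itself) \<Rightarrow> bool" where
  "uniformly_convex_space T \<longleftrightarrow> (\<forall>\<epsilon>. 0 < \<epsilon> \<and> \<epsilon> < 2 \<longrightarrow> modconv T \<epsilon> > 0)"

definition gamma0 :: "'a::real_normed_vector set \<Rightarrow> real \<Rightarrow> real" where
  "gamma0 S \<epsilon> = Inf {\<gamma>. \<gamma> > 0 \<and>
     (\<forall>x1\<in>S. \<forall>x2\<in>S. norm (x1 - x2) \<le> \<epsilon> \<longrightarrow> cball (midpoint x1 x2) \<gamma> \<inter> S \<noteq> {})}"

definition modnonconv :: "'a::real_normed_vector set \<Rightarrow> real \<Rightarrow> real" where
  "modnonconv S \<epsilon> = (if \<epsilon> = 0 then 0 else Lim (at_right \<epsilon>) (gamma0 S))"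

definition weakly_convex_on :: "'a::real_normed_vector set \<Rightarrow> real \<Rightarrow> bool" where
  "weakly_convex_on S d' \<longleftrightarrow> (\<forall>\<epsilon>. 0 < \<epsilon> \<and> \<epsilon> < d' \<longrightarrow> modnonconv S \<epsilon> < \<epsilon> / 2)"

definition condition_i :: "(real \<Rightarrow> real) \<Rightarrow> (real \<Rightarrow> real) \<Rightarrow> real \<Rightarrow> bool" where
  "condition_i \<delta> \<gamma> D \<longleftrightarrow> (\<exists>s0>0. \<forall>s. 0 < s \<and> s \<le> s0 \<longrightarrow>
     (\<exists>ts. s < ts \<and> ts < D \<and> \<delta> (ts - s) = \<gamma> ts \<and>
        (\<forall>t. ts < t \<and> t < D \<longrightarrow> \<delta> (t - s) - \<gamma> t > 0) \<and>
        strict_mono_on {ts<..<D} (\<lambda>t. \<delta> (t - s) - \<gamma> t) \<and>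
        (\<exists>t'. ts < t' \<and> t' < D \<and> \<delta> (t' - s) - \<gamma> t' = s / 2)))"

end

theory Submission
  imports Defs
begin


definition G0set :: "'a::real_normed_vector set \<Rightarrow> real \<Rightarrow> real set" where
  "G0set S t = {\<gamma>. \<gamma> > 0 \<and>
     (\<forall>x1\<in>S. \<forall>x2\<in>S. norm (x1 - x2) \<le> t \<longrightarrow> cball (midpoint x1 x2) \<gamma> \<inter> S \<noteq> {})}"

lemma gamma0_G0: "gamma0 S t = Inf (G0set S t)"
  by (simp add: gamma0_def G0set_def)

lemma G0set_half: assumes "t > 0" shows "t/2 \<in> G0set S t"
proof -
  { fix x1 x2 assume "x1 \<in> S" "x2 \<in> S" "norm (x1 - x2) \<le> t"
    then have "x1 \<in> cball (midpoint x1 x2) (t/2) \<inter> S"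
      using dist_midpoint(3)[of x1 x2] by (simp add: dist_norm)
    then have "cball (midpoint x1 x2) (t/2) \<inter> S \<noteq> {}" by blast }
  then show ?thesis using assms by (auto simp: G0set_def)
qed

lemma G0set_bdd: "bdd_below (G0set S t)"
  by (rule bdd_belowI[of _ 0]) (auto simp: G0set_def)

lemma gamma0_nonneg: "t > 0 \<Longrightarrow> 0 \<le> gamma0 S t"
proof -
  assume "t > 0"
  then have "G0set S t \<noteq> {}" using G0set_half by blast
  then show ?thesis unfolding gamma0_G0 by (rule cInf_greatest) (auto simp: G0set_def)
qed

lemma gamma0_le_half: "t > 0 \<Longrightarrow> gamma0 S t \<le> t/2"
  unfolding gamma0_G0 by (rule cInf_lower[OF G0set_half G0set_bdd])

lemma gamma0_mono: assumes "0 < t" "t \<le> t'" shows "gamma0 S t \<le> gamma0 S t'"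
  unfolding gamma0_G0
proof (rule cInf_superset_mono)
  show "G0set S t' \<noteq> {}" using G0set_half[of t'] assms by auto
  show "bdd_below (G0set S t)" by (rule G0set_bdd)
  show "G0set S t' \<subseteq> G0set S t" using assms by (auto simp: G0set_def)
qed

lemma modnonconv_Inf: assumes "e > 0" shows "modnonconv S e = Inf (gamma0 S ` {e<..})"
proof -
  have "(gamma0 S \<longlongrightarrow> Inf (gamma0 S ` ({e<..} \<inter> UNIV))) (at e within ({e<..} \<inter> UNIV))"
    by (rule Lim_right_bound[where K=0]) (use assms in \<open>auto intro: gamma0_mono gamma0_nonneg\<close>)
  then have "(gamma0 S \<longlongrightarrow> Inf (gamma0 S ` {e<..})) (at_right e)" by simp
  then show ?thesis using assms unfolding modnonconv_def
    by (simp add: tendsto_Lim trivial_limit_at_right_real)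
qed

lemma gamma0_img_bdd: "e > 0 \<Longrightarrow> bdd_below (gamma0 S ` {e<..})"
  by (rule bdd_belowI[of _ 0]) (auto intro: gamma0_nonneg)

lemma gamma0_le_modnonconv: assumes "e > 0" shows "gamma0 S e \<le> modnonconv S e"
  unfolding modnonconv_Inf[OF assms]
  by (rule cINF_greatest) (use assms in \<open>auto intro: gamma0_mono\<close>)

lemma modnonconv_mono_set:
  assumes "e > 0" "\<And>t. t > e \<Longrightarrow> gamma0 S t \<le> gamma0 T t"
  shows "modnonconv S e \<le> modnonconv T e"
  unfolding modnonconv_Inf[OF assms(1)]
  by (rule cINF_mono) (use assms in \<open>auto intro: gamma0_img_bdd\<close>)


lemma shift_lemma:
  fixes c x1 x2 p :: "'a::real_normed_vector"
  assumes dpos: "d > 0" and x1: "x1 \<in> cball c r" and x2: "x2 \<in> cball c r" and rd: "r \<le> d"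
    and ne: "x1 \<noteq> x2"
    and pm: "norm (p - midpoint x1 x2) < d * modconv TYPE('a) (norm (x1 - x2) / d)"
  shows "p \<in> cball c r"
proof -
  define \<eta> where "\<eta> = norm (x1 - x2)"
  have etapos: "\<eta> > 0" using ne by (simp add: \<eta>_def)
  define m where "m = midpoint x1 x2"
  define v where "v = (if m = c then (1/\<eta>) *\<^sub>R (x1 - x2) else (1/norm (m - c)) *\<^sub>R (m - c))"
  have vn: "norm v = 1" using etapos by (auto simp: v_def \<eta>_def)
  have mcv: "m - c = norm (m - c) *\<^sub>R v"
    by (auto simp: v_def)
  define y where "y = c - (d - r) *\<^sub>R v"
  define x1' where "x1' = (1/d) *\<^sub>R (x1 - y)"
  define x2' where "x2' = (1/d) *\<^sub>R (x2 - y)"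
  have nxy: "norm (z - y) \<le> d" if "z \<in> cball c r" for z
  proof -
    have "z - y = (z - c) + (d - r) *\<^sub>R v" by (simp add: y_def algebra_simps)
    also have "norm \<dots> \<le> norm (z - c) + norm ((d - r) *\<^sub>R v)" by (rule norm_triangle_ineq)
    also have "\<dots> = norm (z - c) + (d - r)" using vn rd by simp
    also have "\<dots> \<le> r + (d - r)" using that by (simp add: dist_norm norm_minus_commute)
    finally show ?thesis by simp
  qed
  have n1: "x1' \<in> cball 0 1" using nxy[OF x1] dpos by (simp add: x1'_def mem_cball)
  have n2: "x2' \<in> cball 0 1" using nxy[OF x2] dpos by (simp add: x2'_def mem_cball)
  have n12: "norm (x1' - x2') = \<eta> / d"
  proof -
    have "x1' - x2' = (1/d) *\<^sub>R (x1 - x2)" by (simp add: x1'_def x2'_def algebra_simps)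
    then show ?thesis using dpos by (simp add: \<eta>_def)
  qed
  define D0 where "D0 = {\<delta>. \<delta> \<ge> 0 \<and>
     (\<forall>x1 x2::'a. x1 \<in> cball 0 1 \<longrightarrow> x2 \<in> cball 0 1 \<longrightarrow> norm (x1 - x2) = \<eta> / d \<longrightarrow>
        cball (midpoint x1 x2) \<delta> \<subseteq> cball 0 1)}"
  have mc: "modconv TYPE('a) (\<eta>/d) = Sup D0" by (simp add: modconv_def D0_def)
  have "0 \<in> D0"
  proof -
    { fix a b :: 'a assume "a \<in> cball 0 1" "b \<in> cball 0 1"
      then have "norm (midpoint a b) \<le> 1"
        using norm_triangle_ineq[of a b] by (simp add: midpoint_def mem_cball)
      then have "cball (midpoint a b) 0 \<subseteq> cball 0 1" by (simp) }
    then show ?thesis by (auto simp: D0_def)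
  qed
  have bdd: "bdd_above D0"
  proof (rule bdd_aboveI[of _ 1])
    fix \<delta> assume "\<delta> \<in> D0"
    then have sub: "cball (midpoint x1' x2') \<delta> \<subseteq> cball 0 1" and d0: "\<delta> \<ge> 0"
      using n1 n2 n12 by (auto simp: D0_def)
    have a: "midpoint x1' x2' + \<delta> *\<^sub>R v \<in> cball 0 1"
      by (rule subsetD[OF sub]) (use vn d0 in \<open>simp add: dist_norm\<close>)
    have b: "midpoint x1' x2' - \<delta> *\<^sub>R v \<in> cball 0 1"
      by (rule subsetD[OF sub]) (use vn d0 in \<open>simp add: dist_norm\<close>)
    have "norm ((midpoint x1' x2' + \<delta> *\<^sub>R v) - (midpoint x1' x2' - \<delta> *\<^sub>R v)) \<le> 2"
      using norm_triangle_ineq4[of "midpoint x1' x2' + \<delta> *\<^sub>R v" "midpoint x1' x2' - \<delta> *\<^sub>R v"] a b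
      by (simp)
    moreover have "(midpoint x1' x2' + \<delta> *\<^sub>R v) - (midpoint x1' x2' - \<delta> *\<^sub>R v) = (2*\<delta>) *\<^sub>R v"
      by (simp add: algebra_simps scaleR_2 flip: scaleR_add_left)
    ultimately show "\<delta> \<le> 1" using vn d0 by simp
  qed
  have "norm (p - m) / d < Sup D0"
    using pm dpos by (simp add: m_def mc[symmetric] \<eta>_def field_simps)
  then obtain \<delta>' where "\<delta>' \<in> D0" and lt: "norm (p - m) / d < \<delta>'"
    using less_cSup_iff[of D0] \<open>0 \<in> D0\<close> bdd by blast
  then have sub: "cball (midpoint x1' x2') \<delta>' \<subseteq> cball 0 1" and d0: "\<delta>' \<ge> 0"
    using n1 n2 n12 by (auto simp: D0_def)
  have mid': "midpoint x1' x2' = ((norm (m - c) + (d - r)) / d) *\<^sub>R v"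
  proof -
    have "midpoint x1' x2' = (1/d) *\<^sub>R (m - y)"
      by (simp add: midpoint_def x1'_def x2'_def m_def algebra_simps flip: scaleR_add_left)
    also have "m - y = (m - c) + (d - r) *\<^sub>R v" by (simp add: y_def)
    also have "\<dots> = (norm (m - c) + (d - r)) *\<^sub>R v" by (subst mcv) (simp add: algebra_simps)
    finally show ?thesis by simp
  qed
  have "midpoint x1' x2' + \<delta>' *\<^sub>R v \<in> cball 0 1"
    by (rule subsetD[OF sub]) (use vn d0 in \<open>simp add: dist_norm\<close>)
  then have "norm ((((norm (m - c) + (d - r)) / d) + \<delta>') *\<^sub>R v) \<le> 1"
    by (simp add: mid' mem_cball algebra_simps)
  then have "\<bar>((norm (m - c) + (d - r)) / d) + \<delta>'\<bar> \<le> 1" using vn by simp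
  moreover have "((norm (m - c) + (d - r)) / d) + \<delta>' \<ge> 0" using rd dpos d0 by simp
  ultimately have "(norm (m - c) + (d - r)) / d + \<delta>' \<le> 1" by simp
  then have "norm (m - c) + (d - r) + d * \<delta>' \<le> d" using dpos by (simp add: field_simps)
  moreover have "norm (p - m) < d * \<delta>'" using lt dpos by (simp add: field_simps)
  moreover have "norm (p - c) \<le> norm (p - m) + norm (m - c)"
    using norm_triangle_ineq[of "p - m" "m - c"] by simp
  ultimately show ?thesis by (simp add: dist_norm norm_minus_commute)
qed


primrec grid :: "('a \<Rightarrow> 'a \<Rightarrow> 'a) \<Rightarrow> 'a \<Rightarrow> 'a \<Rightarrow> nat \<Rightarrow> nat \<Rightarrow> 'a" where
  "grid ch a b 0 = (\<lambda>i. if i = 0 then a else b)"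
| "grid ch a b (Suc k) = (\<lambda>j. if even j then grid ch a b k (j div 2)
      else ch (grid ch a b k (j div 2)) (grid ch a b k (Suc (j div 2))))"

lemma grid_ends: "grid ch a b k 0 = a" "grid ch a b k (2^k) = b"
  by (induction k) auto

lemma grid_in:
  assumes "a \<in> S" "b \<in> S" "\<And>x y. x \<in> S \<Longrightarrow> y \<in> S \<Longrightarrow> ch x y \<in> S"
  shows "i \<le> 2^k \<Longrightarrow> grid ch a b k i \<in> S"
proof (induction k arbitrary: i)
  case 0 then show ?case using assms by auto
next
  case (Suc k)
  show ?case
  proof (cases "even i")
    case True then show ?thesis using Suc by auto
  next
    case False
    have "i \<noteq> 2^Suc k" using False by auto
    then have "i < 2^k * 2" using Suc.prems by simp
    then have "i div 2 < 2^k" by (rule less_mult_imp_div_less)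
    then show ?thesis using False Suc.IH assms(3) by simp
  qed
qed

lemma grid_inv:
  assumes ball: "\<And>x y. x \<in> S \<Longrightarrow> y \<in> S \<Longrightarrow> x \<in> B \<Longrightarrow> y \<in> B \<Longrightarrow> ch x y \<in> B"
    and a: "a \<in> S" "b \<in> S" and chS: "\<And>x y. x \<in> S \<Longrightarrow> y \<in> S \<Longrightarrow> ch x y \<in> S"
    and i: "i < 2^k" and gi: "grid ch a b k i \<in> B" "grid ch a b k (Suc i) \<in> B"
  shows "i * 2^m \<le> j \<Longrightarrow> j \<le> Suc i * 2^m \<Longrightarrow> grid ch a b (k + m) j \<in> B"
proof (induction m arbitrary: j)
  case 0
  then have "j = i \<or> j = Suc i" by auto
  then show ?case using gi by auto
next
  case (Suc m)
  define P :: nat where "P = 2^m"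
  have P2: "2^Suc m = 2 * P" by (simp add: P_def)
  have lo: "i * P \<le> j div 2" using Suc.prems(1) P2 by auto
  have hi: "j div 2 \<le> Suc i * P" using Suc.prems(2) P2 by auto
  have bound: "Suc i * P \<le> 2^(k+m)"
  proof -
    have "Suc i \<le> 2^k" using i by simp
    then have "Suc i * P \<le> 2^k * P" by (rule mult_right_mono) simp
    then show ?thesis by (simp add: P_def power_add)
  qed
  show ?case
  proof (cases "even j")
    case True
    then show ?thesis using Suc.IH[OF lo[unfolded P_def] hi[unfolded P_def]] by simp
  next
    case False
    have "even (Suc i * 2^Suc m)" by simp
    then have "j \<noteq> Suc i * 2^Suc m" using False by metis
    then have "j < Suc i * (2 * P)" using Suc.prems(2) P2 by auto
    moreover obtain q where "j = 2 * q + 1" using False oddE by blast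
    ultimately have hi2: "Suc (j div 2) \<le> Suc i * P" by simp
    have lo2: "i * P \<le> Suc (j div 2)" using lo by simp
    have in1: "grid ch a b (k+m) (j div 2) \<in> S"
      by (rule grid_in[OF a chS]) (use hi bound in auto)
    have in2: "grid ch a b (k+m) (Suc (j div 2)) \<in> S"
      by (rule grid_in[OF a chS]) (use hi2 bound in auto)
    show ?thesis using False ball[OF in1 in2 Suc.IH[OF lo[unfolded P_def] hi[unfolded P_def]] Suc.IH[OF lo2[unfolded P_def] hi2[unfolded P_def]]] by simp
  qed
qed

lemma grid_step_dist:
  assumes ch_eq: "\<And>x. ch x x = x"
    and ch_dist: "\<And>x y. x \<in> S \<Longrightarrow> y \<in> S \<Longrightarrow> x \<noteq> y \<Longrightarrow>
        dist x (ch x y) \<le> \<phi> (dist x y) \<and> dist (ch x y) y \<le> \<phi> (dist x y)"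
    and inS: "grid ch a b k (j div 2) \<in> S" "grid ch a b k (Suc (j div 2)) \<in> S"
  shows "dist (grid ch a b (Suc k) j) (grid ch a b (Suc k) (Suc j)) \<le>
    (if grid ch a b k (j div 2) = grid ch a b k (Suc (j div 2)) then 0
     else \<phi> (dist (grid ch a b k (j div 2)) (grid ch a b k (Suc (j div 2)))))"
proof (cases "even j")
  case True
  then have "Suc j div 2 = j div 2" by auto
  with True show ?thesis using ch_dist[OF inS] ch_eq by (auto simp: dist_commute)
next
  case False
  then have "Suc j div 2 = Suc (j div 2)" by auto
  with False show ?thesis using ch_dist[OF inS] ch_eq by auto
qed

lemma idx_facts:
  fixes t t' :: real
  shows "0 \<le> t \<Longrightarrow> t \<le> 1 \<Longrightarrow> nat \<lfloor>t * 2^k\<rfloor> \<le> 2^k"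
    and "0 \<le> t \<Longrightarrow> t < 1 \<Longrightarrow> nat \<lfloor>t * 2^k\<rfloor> < 2^k"
    and "0 \<le> t \<Longrightarrow> nat \<lfloor>t * 2^k\<rfloor> * 2^m \<le> nat \<lfloor>t * 2^(k+m)\<rfloor>"
    and "0 \<le> t \<Longrightarrow> nat \<lfloor>t * 2^(k+m)\<rfloor> \<le> Suc (nat \<lfloor>t * 2^k\<rfloor>) * 2^m"
    and "0 \<le> t \<Longrightarrow> 0 \<le> t' \<Longrightarrow> \<bar>t - t'\<bar> < 1/2^k \<Longrightarrow> nat \<lfloor>t * 2^k\<rfloor> \<le> Suc (nat \<lfloor>t' * 2^k\<rfloor>)"
proof -
  assume t: "0 \<le> t" "t \<le> 1"
  have "t * 2^k \<le> 1 * 2^k" using t by (intro mult_right_mono) auto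
  then have h: "t * 2^k < (2::real)^k + 1" by linarith
  have "\<lfloor>t * 2^k\<rfloor> \<le> 2^k" by (subst floor_le_iff) (use h in simp)
  then show "nat \<lfloor>t * 2^k\<rfloor> \<le> 2^k" by (simp add: nat_le_iff)
next
  assume t: "0 \<le> t" "t < 1"
  have "t * 2^k < 1 * 2^k" using t by (intro mult_strict_right_mono) auto
  then have "\<lfloor>t * 2^k\<rfloor> < 2^k" by (simp add: floor_less_iff)
  then show "nat \<lfloor>t * 2^k\<rfloor> < 2^k" by (simp add: nat_less_iff)
next
  assume t: "0 \<le> t"
  define x where "x = t * 2^k"
  have x0: "0 \<le> x" using t by (simp add: x_def)
  have e: "t * 2^(k+m) = x * 2^m" by (simp add: x_def power_add)
  have f0: "0 \<le> \<lfloor>x\<rfloor>" using x0 by simp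
  have "real_of_int (\<lfloor>x\<rfloor> * 2^m) \<le> x * 2^m"
    by simp
  then have "\<lfloor>x\<rfloor> * 2^m \<le> \<lfloor>x * 2^m\<rfloor>" by (simp only: le_floor_iff)
  then have "int (nat \<lfloor>x\<rfloor> * 2^m) \<le> int (nat \<lfloor>x * 2^m\<rfloor>)" using f0 x0 by simp
  then show "nat \<lfloor>t * 2^k\<rfloor> * 2^m \<le> nat \<lfloor>t * 2^(k+m)\<rfloor>" unfolding e x_def[symmetric]
    by (simp only: of_nat_le_iff)
next
  assume t: "0 \<le> t"
  define x where "x = t * 2^k"
  have x0: "0 \<le> x" using t by (simp add: x_def)
  have e: "t * 2^(k+m) = x * 2^m" by (simp add: x_def power_add)
  have f0: "0 \<le> \<lfloor>x\<rfloor>" using x0 by simp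
  have "x * 2^m \<le> (real_of_int \<lfloor>x\<rfloor> + 1) * 2^m"
    by (intro mult_right_mono) (auto simp: less_imp_le)
  moreover have "real_of_int ((\<lfloor>x\<rfloor> + 1) * 2^m) = (real_of_int \<lfloor>x\<rfloor> + 1) * 2^m" by simp
  ultimately have "x * 2^m < real_of_int ((\<lfloor>x\<rfloor> + 1) * 2^m) + 1" by linarith
  then have "\<lfloor>x * 2^m\<rfloor> \<le> (\<lfloor>x\<rfloor> + 1) * 2^m" by (simp only: floor_le_iff)
  then have "int (nat \<lfloor>x * 2^m\<rfloor>) \<le> int (Suc (nat \<lfloor>x\<rfloor>) * 2^m)" using f0 x0 by (simp add: algebra_simps)
  then show "nat \<lfloor>t * 2^(k+m)\<rfloor> \<le> Suc (nat \<lfloor>t * 2^k\<rfloor>) * 2^m" unfolding e x_def[symmetric]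
    by (simp only: of_nat_le_iff)
next
  assume t: "0 \<le> t" "0 \<le> t'" "\<bar>t - t'\<bar> < 1/2^k"
  have "\<bar>t * 2^k - t' * 2^k\<bar> = \<bar>t - t'\<bar> * 2^k" by (simp add: left_diff_distrib[symmetric] abs_mult)
  also have "\<dots> < 1/2^k * 2^k" using t(3) by (intro mult_strict_right_mono) auto
  finally have "t * 2^k < t' * 2^k + 1" by simp
  then have "\<lfloor>t * 2^k\<rfloor> \<le> \<lfloor>t' * 2^k + 1\<rfloor>" by (intro floor_mono) simp
  then have "\<lfloor>t * 2^k\<rfloor> \<le> \<lfloor>t' * 2^k\<rfloor> + 1" by simp
  moreover have "0 \<le> \<lfloor>t' * 2^k\<rfloor>" using t by simp
  ultimately show "nat \<lfloor>t * 2^k\<rfloor> \<le> Suc (nat \<lfloor>t' * 2^k\<rfloor>)" by linarith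
qed

lemma path_from_choice:
  fixes S :: "'a::banach set" and ch :: "'a \<Rightarrow> 'a \<Rightarrow> 'a" and \<phi> :: "real \<Rightarrow> real"
  assumes clo: "closed S" and a: "a \<in> S" and b: "b \<in> S" and Rpos: "R > 0"
    and chS: "\<And>x y. x \<in> S \<Longrightarrow> y \<in> S \<Longrightarrow> ch x y \<in> S"
    and ch_eq: "\<And>x. ch x x = x"
    and diamD: "\<And>x y. x \<in> S \<Longrightarrow> y \<in> S \<Longrightarrow> dist x y \<le> D"
    and ch_dist: "\<And>x y. x \<in> S \<Longrightarrow> y \<in> S \<Longrightarrow> x \<noteq> y \<Longrightarrow>
        dist x (ch x y) \<le> \<phi> (dist x y) \<and> dist (ch x y) y \<le> \<phi> (dist x y)"
    and phi_mono: "\<And>\<eta> \<eta>'. 0 < \<eta> \<Longrightarrow> \<eta> \<le> \<eta>' \<Longrightarrow> \<eta>' \<le> D \<Longrightarrow> \<phi> \<eta> \<le> \<phi> \<eta>'"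
    and phi_le: "\<And>\<eta>. 0 < \<eta> \<Longrightarrow> \<eta> \<le> D \<Longrightarrow> 0 \<le> \<phi> \<eta> \<and> \<phi> \<eta> \<le> \<eta>"
    and P: "\<And>L. 0 < L \<Longrightarrow> L \<le> D \<Longrightarrow> \<exists>u>L. \<exists>c>0. \<forall>\<eta>. L \<le> \<eta> \<and> \<eta> < u \<longrightarrow> \<phi> \<eta> \<le> \<eta> - c"
    and ball: "\<And>c r x y. r \<le> R \<Longrightarrow> x \<in> S \<Longrightarrow> y \<in> S \<Longrightarrow> x \<in> cball c r \<Longrightarrow> y \<in> cball c r
        \<Longrightarrow> ch x y \<in> cball c r"
  shows "\<exists>p. path p \<and> path_image p \<subseteq> S \<and> pathstart p = a \<and> pathfinish p = b"
proof -
  define g where "g = grid ch a b"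
  have gS: "\<And>k i. i \<le> 2^k \<Longrightarrow> g k i \<in> S" unfolding g_def by (rule grid_in[OF a b chS])
  define M where "M = (\<lambda>k. Max ((\<lambda>i. dist (g k i) (g k (Suc i))) ` {..<2^k::nat}))"
  have M_ge: "\<And>k i. i < 2^k \<Longrightarrow> dist (g k i) (g k (Suc i)) \<le> M k"
    unfolding M_def by (rule Max_ge) auto
  have M_in: "\<exists>i<2^k. M k = dist (g k i) (g k (Suc i))" for k
  proof -
    have "M k \<in> (\<lambda>i. dist (g k i) (g k (Suc i))) ` {..<2^k}" unfolding M_def by (rule Max_in) (auto simp: lessThan_empty_iff)
    then show ?thesis by auto
  qed
  have M0: "0 \<le> M k" for k
  proof -
    have "dist (g k 0) (g k (Suc 0)) \<le> M k" by (rule M_ge) simp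
    then show ?thesis using zero_le_dist[of "g k 0" "g k (Suc 0)"] by linarith
  qed
  have MD: "M k \<le> D" for k
  proof -
    obtain i where "i < 2^k" "M k = dist (g k i) (g k (Suc i))" using M_in by blast
    then show ?thesis using diamD gS by auto
  qed
  have Mstep: "M (Suc k) \<le> (if M k = 0 then 0 else \<phi> (M k))" for k
  proof -
    obtain j where j: "j < 2^Suc k" "M (Suc k) = dist (g (Suc k) j) (g (Suc k) (Suc j))"
      using M_in by blast
    define x where "x = g k (j div 2)"
    define y where "y = g k (Suc (j div 2))"
    have "j < 2^k * 2" using j(1) by simp
    then have jd: "j div 2 < 2^k" by (rule less_mult_imp_div_less)
    have inS: "x \<in> S" "y \<in> S" using gS jd by (auto simp: x_def y_def)
    have st0: "dist (g (Suc k) j) (g (Suc k) (Suc j)) \<le> (if x = y then 0 else \<phi> (dist x y))"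
      unfolding g_def x_def y_def
      by (rule grid_step_dist[OF ch_eq ch_dist inS[unfolded x_def y_def g_def]])
    have st: "M (Suc k) \<le> (if x = y then 0 else \<phi> (dist x y))"
      using st0 j(2) by simp
    have le: "dist x y \<le> M k" unfolding x_def y_def by (rule M_ge[OF jd])
    show ?thesis
    proof (cases "x = y")
      case True
      then show ?thesis using st phi_le[of "M k"] M0[of k] MD[of k] by auto
    next
      case False
      then have dp: "0 < dist x y" by simp
      then have "M k \<noteq> 0" using le by auto
      moreover have "\<phi> (dist x y) \<le> \<phi> (M k)" by (rule phi_mono[OF dp le MD])
      ultimately show ?thesis using st False by auto
    qed
  qed
  have Mle: "M (Suc k) \<le> M k" for k
    using Mstep[of k] phi_le[of "M k"] M0[of k] MD[of k] by (auto split: if_splits)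
  have Mdec: "decseq M" by (rule decseq_SucI) (rule Mle)
  have Mlim: "M \<longlonglongrightarrow> 0"
  proof -
    obtain L where L: "M \<longlonglongrightarrow> L" "\<forall>i. L \<le> M i" using decseq_convergent[OF Mdec, of 0] M0 by blast
    have L0: "L \<ge> 0" using L(1) M0 by (intro LIMSEQ_le_const) auto
    show ?thesis
    proof (cases "L = 0")
      case True then show ?thesis using L by simp
    next
      case False
      then have Lpos: "L > 0" using L0 by simp
      have LD: "L \<le> D" using L(2) MD order_trans by blast
      obtain u c where u: "u > L" "c > 0" "\<And>\<eta>. L \<le> \<eta> \<Longrightarrow> \<eta> < u \<Longrightarrow> \<phi> \<eta> \<le> \<eta> - c"
        using P[OF Lpos LD] by blast
      have ev: "eventually (\<lambda>k. M k < u) sequentially" using L(1) u(1) order_tendstoD(2) by blast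
      have ev2: "eventually (\<lambda>k. M (Suc k) \<le> M k - c) sequentially"
        using ev
      proof eventually_elim
        case (elim k)
        have "M k \<noteq> 0" using L(2) Lpos by (metis not_le)
        then show ?case using Mstep[of k] u(3)[of "M k"] L(2) elim by auto
      qed
      have "(\<lambda>k. M (Suc k)) \<longlonglongrightarrow> L" using L(1) by (rule LIMSEQ_Suc)
      moreover have "(\<lambda>k. M k - c) \<longlonglongrightarrow> L - c" using L(1) by (intro tendsto_intros)
      ultimately have "L \<le> L - c" using ev2 by (intro tendsto_le[OF sequentially_bot])
      then show ?thesis using u(2) by simp
    qed
  qed
  have Msmall: "\<exists>k. M k \<le> R \<and> M k < e" if "e > 0" for e
  proof -
    have "eventually (\<lambda>k. M k < min e R) sequentially"
      using Mlim that Rpos by (intro order_tendstoD(2)) auto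
    then obtain k where "M k < min e R" by (auto simp: eventually_sequentially)
    then show ?thesis by (intro exI[of _ k]) auto
  qed
  define idx where "idx = (\<lambda>k (t::real). nat \<lfloor>t * 2^k\<rfloor>)"
  have key: "dist (g (k+m) (idx (k+m) t)) (g k (idx k t)) \<le> M k"
    if t: "0 \<le> t" "t \<le> 1" and MR: "M k \<le> R" for k t m
  proof (cases "idx k t < 2^k")
    case True
    define i where "i = idx k t"
    define r where "r = dist (g k i) (g k (Suc i))"
    have rM: "r \<le> M k" unfolding r_def i_def by (rule M_ge[OF True])
    define c where "c = g k i"
    have "g (k+m) (idx (k+m) t) \<in> cball c r"
      unfolding g_def
    proof (rule grid_inv[where S=S, OF _ a b chS])
      show "i < 2^k" using True by (simp add: i_def)
      show "grid ch a b k i \<in> cball c r" using r_def by (simp add: g_def c_def)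
      show "grid ch a b k (Suc i) \<in> cball c r" using r_def by (simp add: g_def c_def)
      show "i * 2 ^ m \<le> idx (k + m) t" "idx (k + m) t \<le> Suc i * 2 ^ m"
        using idx_facts(3,4)[OF t(1), of k m] by (auto simp: i_def idx_def)
      show "ch x y \<in> cball c r" if "x \<in> S" "y \<in> S" "x \<in> cball c r" "y \<in> cball c r" for x y
        using ball[OF _ that] rM MR by auto
    qed
    then show ?thesis using rM by (simp add: dist_commute i_def c_def)
  next
    case False
    then have i: "idx k t = 2^k" using idx_facts(1)[OF t, of k] by (simp add: idx_def)
    have h3: "idx k t * 2^m \<le> idx (k+m) t" using idx_facts(3)[OF t(1), of k m] by (simp only: idx_def)
    have h1: "idx (k+m) t \<le> 2^(k+m)" using idx_facts(1)[OF t, of "k+m"] by (simp only: idx_def)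
    have "idx (k+m) t = 2^(k+m)" using h1 h3 i by (simp add: power_add)
    then show ?thesis using i grid_ends(2)[of ch a b k] grid_ends(2)[of ch a b "k+m"] M0[of k]
      by (simp add: g_def del: grid.simps)
  qed
  have key': "dist (g n (idx n t)) (g k (idx k t)) \<le> M k"
    if t: "0 \<le> t" "t \<le> 1" and MR: "M k \<le> R" and n: "k \<le> n" for k t n
    using key[OF t MR, of "n - k"] n by simp
  define X where "X = (\<lambda>t k. g k (idx k t))"
  have XS: "X t n \<in> S" if t: "0 \<le> t" "t \<le> 1" for t n
    unfolding X_def idx_def by (rule gS) (rule idx_facts(1)[OF t])
  have conv: "convergent (X t)" if t: "0 \<le> t" "t \<le> 1" for t
  proof -
    have "Cauchy (X t)"
    proof (rule metric_CauchyI)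
      fix e :: real assume "e > 0"
      then obtain k where k: "M k \<le> R" "M k < e/2" using Msmall[of "e/2"] by auto
      show "\<exists>N. \<forall>m\<ge>N. \<forall>n\<ge>N. dist (X t m) (X t n) < e"
      proof (intro exI allI impI)
        fix m n assume "k \<le> m" "k \<le> n"
        then have "dist (X t m) (X t k) \<le> M k" "dist (X t n) (X t k) \<le> M k"
          using key'[OF t k(1)] by (auto simp: X_def)
        then show "dist (X t m) (X t n) < e"
          using dist_triangle3[of "X t m" "X t n" "X t k"] k(2) by (simp add: dist_commute)
      qed
    qed
    then show ?thesis by (simp add: Cauchy_convergent_iff)
  qed
  define F where "F = (\<lambda>t. lim (X t))"
  have FX: "X t \<longlonglongrightarrow> F t" if "0 \<le> t" "t \<le> 1" for t
    using conv[OF that] by (simp add: F_def convergent_LIMSEQ_iff)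
  have FS: "F t \<in> S" if t: "0 \<le> t" "t \<le> 1" for t
    using clo unfolding closed_sequential_limits using FX[OF t] XS[OF t] by blast
  have Fclose: "dist (F t) (X t k) \<le> M k" if t: "0 \<le> t" "t \<le> 1" and MR: "M k \<le> R" for t k
  proof -
    have "(\<lambda>n. dist (X t n) (X t k)) \<longlonglongrightarrow> dist (F t) (X t k)" by (intro tendsto_intros FX[OF t])
    moreover have "\<exists>N. \<forall>n\<ge>N. dist (X t n) (X t k) \<le> M k"
      using key'[OF t MR] by (auto simp: X_def)
    ultimately show ?thesis by (rule LIMSEQ_le_const2)
  qed
  have F0: "F 0 = a"
  proof -
    have "X 0 = (\<lambda>k. a)" by (simp add: X_def idx_def g_def grid_ends)
    then show ?thesis using FX[of 0] LIMSEQ_unique[OF _ tendsto_const] by fastforce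
  qed
  have F1: "F 1 = b"
  proof -
    have "X 1 = (\<lambda>k. b)" by (simp add: X_def idx_def g_def grid_ends nat_power_eq)
    then show ?thesis using FX[of 1] LIMSEQ_unique[OF _ tendsto_const] by fastforce
  qed
  have uc: "uniformly_continuous_on {0..1} F"
    unfolding uniformly_continuous_on_def
  proof (intro allI impI)
    fix e :: real assume "e > 0"
    then obtain k where k: "M k \<le> R" "M k < e/3" using Msmall[of "e/3"] by auto
    show "\<exists>d>0. \<forall>x\<in>{0..1}. \<forall>x'\<in>{0..1}. dist x' x < d \<longrightarrow> dist (F x') (F x) < e"
    proof (intro exI conjI ballI impI)
      show "(0::real) < 1/2^k" by simp
      fix t t' :: real assume tt: "t \<in> {0..1}" "t' \<in> {0..1}" "dist t' t < 1/2^k"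
      then have t: "0 \<le> t" "t \<le> 1" and t': "0 \<le> t'" "t' \<le> 1" by auto
      have c1: "idx k t \<le> Suc (idx k t')" "idx k t' \<le> Suc (idx k t)"
        using idx_facts(5)[of t t' k] idx_facts(5)[of t' t k] tt
        by (auto simp: idx_def dist_real_def abs_minus_commute)
      have mid: "dist (X t' k) (X t k) \<le> M k"
      proof -
        consider "idx k t = idx k t'" | "idx k t = Suc (idx k t')" | "idx k t' = Suc (idx k t)"
          using c1 by linarith
        then show ?thesis
        proof cases
          case 1 then show ?thesis using M0 by (simp add: X_def)
        next
          case 2
          moreover have "idx k t \<le> 2^k" using idx_facts(1)[OF t, of k] by (simp only: idx_def)
          ultimately have "idx k t' < 2^k" by simp
          then show ?thesis using M_ge[of "idx k t'" k] 2 by (simp add: X_def)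
        next
          case 3
          moreover have "idx k t' \<le> 2^k" using idx_facts(1)[OF t', of k] by (simp only: idx_def)
          ultimately have "idx k t < 2^k" by simp
          then show ?thesis using M_ge[of "idx k t" k] 3 by (simp add: X_def dist_commute)
        qed
      qed
      have "dist (F t') (F t) \<le> dist (F t') (X t' k) + dist (X t' k) (X t k) + dist (X t k) (F t)"
        using dist_triangle[of "F t'" "F t" "X t' k"] dist_triangle[of "X t' k" "F t" "X t k"] by linarith
      also have "\<dots> \<le> M k + M k + M k"
        using Fclose[OF t' k(1)] Fclose[OF t k(1)] mid by (simp add: dist_commute)
      finally show "dist (F t') (F t) < e" using k(2) by linarith
    qed
  qed
  then have "continuous_on {0..1} F" by (rule uniformly_continuous_imp_continuous)
  then show ?thesis
    using FS F0 F1
    by (intro exI[of _ F]) (auto simp: path_def path_image_def pathstart_def pathfinish_def)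
qed

lemma near_point:
  fixes A :: "'a::real_normed_vector set"
  assumes "x1 \<in> A" "x2 \<in> A" "norm (x1 - x2) = \<eta>" "\<eta> > 0" "gamma0 A \<eta> < \<tau>"
  shows "\<exists>p. p \<in> A \<and> norm (p - midpoint x1 x2) < \<tau>"
proof -
  have ne: "G0set A \<eta> \<noteq> {}" using G0set_half[OF assms(4)] by blast
  have "Inf (G0set A \<eta>) < \<tau>" using assms(5) by (simp add: gamma0_G0)
  then obtain \<gamma> where g: "\<gamma> \<in> G0set A \<eta>" "\<gamma> < \<tau>"
    using cInf_less_iff[OF ne G0set_bdd] by blast
  then have "cball (midpoint x1 x2) \<gamma> \<inter> A \<noteq> {}" using assms(1-3) by (auto simp: G0set_def)
  then obtain p where "p \<in> A" "dist (midpoint x1 x2) p \<le> \<gamma>" by auto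
  then show ?thesis using g(2) by (intro exI[of _ p]) (auto simp: dist_norm norm_minus_commute)
qed

theorem theorem3p3:
  fixes A :: "'a::banach set" and d d1 :: real
  assumes "uniformly_convex_space TYPE('a)"
    and "d > 0"
    and "closed A"
    and "weakly_convex_on A (2 * d)"
    and "\<forall>\<epsilon>. 0 < \<epsilon> \<and> \<epsilon> < 2 * d \<longrightarrow> d * modconv TYPE('a) (\<epsilon> / d) > modnonconv A \<epsilon>"
    and "condition_i (\<lambda>t. d * modconv TYPE('a) (t / d)) (modnonconv A) (2 * d)"
    and "0 < d1" and "d1 < d"
  shows "\<forall>x::'a. A \<inter> cball x d1 \<noteq> {} \<longrightarrow>
     weakly_convex_on (A \<inter> cball x d1) (diameter (A \<inter> cball x d1)) \<and>
     (\<forall>\<epsilon>. 0 \<le> \<epsilon> \<and> \<epsilon> < diameter (A \<inter> cball x d1) \<longrightarrow>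
        modnonconv (A \<inter> cball x d1) \<epsilon> \<le> modnonconv A \<epsilon>) \<and>
     path_connected (A \<inter> cball x d1)"
proof (intro allI impI)
  fix x :: 'a
  assume ne: "A \<inter> cball x d1 \<noteq> {}"
  define S where "S = A \<inter> cball x d1"
  define \<delta>d where "\<delta>d = (\<lambda>\<eta>. d * modconv TYPE('a) (\<eta> / d))"
  have dpos: "d > 0" and d1pos: "0 < d1" and d1d: "d1 < d" using assms by auto
  have wc: "modnonconv A \<eta> < \<eta>/2" if "0 < \<eta>" "\<eta> < 2*d" for \<eta>
    using assms(4) that by (auto simp: weakly_convex_on_def)
  have mdd: "modnonconv A \<eta> < \<delta>d \<eta>" if "0 < \<eta>" "\<eta> < 2*d" for \<eta>
    using assms(5) that by (auto simp: \<delta>d_def)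
  have H: "gamma0 A \<eta> < \<delta>d \<eta> \<and> gamma0 A \<eta> < \<eta>/2" if "0 < \<eta>" "\<eta> < 2*d" for \<eta>
    using gamma0_le_modnonconv[OF that(1), of A] wc[OF that] mdd[OF that] by linarith
  have distS: "norm (y1 - y2) \<le> 2 * d1" if "y1 \<in> S" "y2 \<in> S" for y1 y2
  proof -
    have "norm (y1 - y2) \<le> norm (y1 - x) + norm (x - y2)"
      using norm_triangle_ineq[of "y1 - x" "x - y2"] by simp
    also have "\<dots> \<le> d1 + d1" using that
      by (intro add_mono) (auto simp: S_def dist_norm norm_minus_commute)
    finally show ?thesis by simp
  qed
  have diamS: "diameter S \<le> 2 * d1"
    by (rule diameter_le) (use ne distS in \<open>auto simp: S_def\<close>)
  have stay: "p \<in> cball c r"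
    if "y1 \<in> cball c r" "y2 \<in> cball c r" "r \<le> d" "y1 \<noteq> y2"
       "norm (p - midpoint y1 y2) < \<delta>d (norm (y1 - y2))" for y1 y2 p c :: 'a and r
    using shift_lemma[OF dpos that(1,2,3,4)] that(5) by (simp add: \<delta>d_def)
  have partA: "gamma0 S t \<le> gamma0 A t" if tpos: "t > 0" for t
  proof (rule dense_ge)
    fix \<gamma> assume g: "gamma0 A t < \<gamma>"
    have gpos: "\<gamma> > 0" using gamma0_nonneg[OF tpos, of A] g by linarith
    have "\<gamma> \<in> G0set S t"
      unfolding G0set_def
    proof (intro CollectI conjI ballI impI gpos)
      fix y1 y2 assume y: "y1 \<in> S" "y2 \<in> S" "norm (y1 - y2) \<le> t"
      show "cball (midpoint y1 y2) \<gamma> \<inter> S \<noteq> {}"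
      proof (cases "y1 = y2")
        case True
        then have "y1 \<in> cball (midpoint y1 y2) \<gamma> \<inter> S" using y gpos by auto
        then show ?thesis by blast
      next
        case False
        define \<eta> where "\<eta> = norm (y1 - y2)"
        have ep: "\<eta> > 0" using False by (simp add: \<eta>_def)
        have e2: "\<eta> < 2*d" using distS[OF y(1,2)] d1d by (simp add: \<eta>_def)
        have "gamma0 A \<eta> \<le> gamma0 A t" using gamma0_mono[OF ep] y(3) by (simp add: \<eta>_def)
        then have "gamma0 A \<eta> < min \<gamma> (\<delta>d \<eta>)" using g H[OF ep e2] by simp
        then obtain p where p: "p \<in> A" "norm (p - midpoint y1 y2) < min \<gamma> (\<delta>d \<eta>)"
          using near_point[of y1 A y2 \<eta> "min \<gamma> (\<delta>d \<eta>)"] y ep by (auto simp: S_def \<eta>_def)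
        have "p \<in> cball x d1"
          using stay[of y1 x d1 y2 p] y p(2) d1d False by (auto simp: S_def \<eta>_def)
        moreover have "p \<in> cball (midpoint y1 y2) \<gamma>"
          using p(2) by (simp add: dist_norm norm_minus_commute)
        ultimately show ?thesis using p(1) by (auto simp: S_def)
      qed
    qed
    then show "gamma0 S t \<le> \<gamma>" unfolding gamma0_G0 by (rule cInf_lower[OF _ G0set_bdd])
  qed
  have partB: "modnonconv S \<epsilon> \<le> modnonconv A \<epsilon>" if "0 \<le> \<epsilon>" for \<epsilon>
  proof (cases "\<epsilon> = 0")
    case True then show ?thesis by (simp add: modnonconv_def)
  next
    case False
    then have "\<epsilon> > 0" using that by simp
    then show ?thesis by (rule modnonconv_mono_set) (use partA \<open>\<epsilon> > 0\<close> in auto)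
  qed
  have partC: "weakly_convex_on S (diameter S)"
    unfolding weakly_convex_on_def
  proof (intro allI impI)
    fix \<epsilon> assume e: "0 < \<epsilon> \<and> \<epsilon> < diameter S"
    then have "\<epsilon> < 2*d" using diamS d1d by linarith
    then show "modnonconv S \<epsilon> < \<epsilon>/2" using partB[of \<epsilon>] wc[of \<epsilon>] e by linarith
  qed
  define \<tau> where "\<tau> = (\<lambda>\<eta>. (gamma0 A \<eta> + min (\<delta>d \<eta>) (\<eta>/2)) / 2)"
  define ch where "ch = (\<lambda>y1 y2. if y1 = y2 then y1
     else SOME p. p \<in> A \<and> norm (p - midpoint y1 y2) < \<tau> (norm (y1 - y2)))"
  define \<phi> where "\<phi> = (\<lambda>\<eta>. 3 * \<eta> / 4 + gamma0 A \<eta> / 2)"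
  have ch_spec: "ch y1 y2 \<in> A \<and> norm (ch y1 y2 - midpoint y1 y2) < \<tau> (norm (y1 - y2))"
    if y: "y1 \<in> S" "y2 \<in> S" "y1 \<noteq> y2" for y1 y2
  proof -
    define \<eta> where "\<eta> = norm (y1 - y2)"
    have ep: "\<eta> > 0" using y by (simp add: \<eta>_def)
    have e2: "\<eta> < 2*d" using distS[OF y(1,2)] d1d by (simp add: \<eta>_def)
    have "gamma0 A \<eta> < \<tau> \<eta>" using H[OF ep e2] by (simp add: \<tau>_def)
    then have "\<exists>p. p \<in> A \<and> norm (p - midpoint y1 y2) < \<tau> \<eta>"
      using near_point[of y1 A y2 \<eta>] y ep by (auto simp: S_def \<eta>_def)
    then have "(SOME p. p \<in> A \<and> norm (p - midpoint y1 y2) < \<tau> \<eta>) \<in> A \<and>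
      norm ((SOME p. p \<in> A \<and> norm (p - midpoint y1 y2) < \<tau> \<eta>) - midpoint y1 y2) < \<tau> \<eta>"
      by (rule someI_ex)
    then show ?thesis using y(3) unfolding ch_def \<eta>_def by simp
  qed
  have tau_lt: "\<tau> \<eta> < \<delta>d \<eta>" "\<tau> \<eta> \<le> (gamma0 A \<eta> + \<eta>/2)/2" if "0 < \<eta>" "\<eta> < 2*d" for \<eta>
    using H[OF that] by (auto simp: \<tau>_def)
  have ch_ball: "ch y1 y2 \<in> cball c r"
    if "r \<le> d" "y1 \<in> S" "y2 \<in> S" "y1 \<in> cball c r" "y2 \<in> cball c r" for c :: 'a and r y1 y2
  proof (cases "y1 = y2")
    case True then show ?thesis using that by (simp add: ch_def)
  next
    case False
    have ep: "norm (y1 - y2) > 0" using False by simp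
    have e2: "norm (y1 - y2) < 2*d" using distS[OF that(2,3)] d1d by simp
    show ?thesis
      using ch_spec[OF that(2,3) False] tau_lt[OF ep e2]
      by (intro stay[OF that(4,5,1) False]) linarith
  qed
  have pc: "path_connected S"
    unfolding path_connected_def
  proof (intro ballI)
    fix a b assume ab: "a \<in> S" "b \<in> S"
    show "\<exists>g. path g \<and> path_image g \<subseteq> S \<and> pathstart g = a \<and> pathfinish g = b"
    proof (rule path_from_choice[where ch=ch and R=d and D="2*d1" and \<phi>=\<phi>])
      show "closed S" using assms(3) by (simp add: S_def closed_Int)
      show "a \<in> S" "b \<in> S" "0 < d" using ab dpos by auto
      show "ch y1 y2 \<in> S" if "y1 \<in> S" "y2 \<in> S" for y1 y2
      proof (cases "y1 = y2")
        case True then show ?thesis using that by (simp add: ch_def)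
      next
        case False
        then show ?thesis using ch_spec[OF that False] ch_ball[of d1 y1 y2 x] that d1d
          by (auto simp: S_def)
      qed
      show "ch y y = y" for y by (simp add: ch_def)
      show "dist y1 y2 \<le> 2 * d1" if "y1 \<in> S" "y2 \<in> S" for y1 y2
        using distS[OF that] by (simp add: dist_norm)
      show "dist y1 (ch y1 y2) \<le> \<phi> (dist y1 y2) \<and> dist (ch y1 y2) y2 \<le> \<phi> (dist y1 y2)"
        if y: "y1 \<in> S" "y2 \<in> S" "y1 \<noteq> y2" for y1 y2
      proof -
        define \<eta> where "\<eta> = norm (y1 - y2)"
        define m where "m = midpoint y1 y2"
        have ep: "\<eta> > 0" using y by (simp add: \<eta>_def)
        have e2: "\<eta> < 2*d" using distS[OF y(1,2)] d1d by (simp add: \<eta>_def)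
        have pm: "dist (ch y1 y2) m \<le> (gamma0 A \<eta> + \<eta>/2)/2"
          using ch_spec[OF y] tau_lt(2)[OF ep e2] by (simp add: dist_norm \<eta>_def m_def)
        have "dist y1 (ch y1 y2) \<le> dist y1 m + dist (ch y1 y2) m"
          using dist_triangle[of y1 "ch y1 y2" m] by (simp add: dist_commute)
        moreover have "dist (ch y1 y2) y2 \<le> dist (ch y1 y2) m + dist m y2"
          using dist_triangle[of "ch y1 y2" y2 m] by simp
        moreover have "dist y1 m = \<eta>/2" "dist m y2 = \<eta>/2"
          using dist_midpoint[of y1 y2] by (auto simp: m_def \<eta>_def dist_norm)
        ultimately show ?thesis using pm by (simp add: \<phi>_def dist_norm \<eta>_def[symmetric])
      qed
      show "\<phi> \<eta> \<le> \<phi> \<eta>'" if "0 < \<eta>" "\<eta> \<le> \<eta>'" "\<eta>' \<le> 2 * d1" for \<eta> \<eta>'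
        using gamma0_mono[OF that(1,2), of A] that(2) by (simp add: \<phi>_def)
      show "0 \<le> \<phi> \<eta> \<and> \<phi> \<eta> \<le> \<eta>" if "0 < \<eta>" "\<eta> \<le> 2 * d1" for \<eta>
        using gamma0_nonneg[OF that(1), of A] gamma0_le_half[OF that(1), of A] that(1)
        by (simp add: \<phi>_def)
      show "\<exists>u>L. \<exists>c>0. \<forall>\<eta>. L \<le> \<eta> \<and> \<eta> < u \<longrightarrow> \<phi> \<eta> \<le> \<eta> - c"
        if L: "0 < L" "L \<le> 2 * d1" for L
      proof -
        define c' where "c' = L/2 - modnonconv A L"
        have c'pos: "c' > 0" using wc[of L] L d1d by (simp add: c'_def)
        have "Inf (gamma0 A ` {L<..}) < modnonconv A L + c'/2"
          using modnonconv_Inf[OF L(1), of A] c'pos by simp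
        then obtain u where u: "u > L" "gamma0 A u < modnonconv A L + c'/2"
          using cInf_less_iff[of "gamma0 A ` {L<..}"] gamma0_img_bdd[OF L(1), of A] by auto
        show ?thesis
        proof (intro exI conjI allI impI)
          show "u > L" "c'/4 > 0" using u c'pos by auto
          fix \<eta> assume e: "L \<le> \<eta> \<and> \<eta> < u"
          then have "gamma0 A \<eta> \<le> gamma0 A u" using L(1) by (intro gamma0_mono) auto
          then show "\<phi> \<eta> \<le> \<eta> - c'/4" using u(2) e unfolding \<phi>_def c'_def by (auto simp: field_simps)
        qed
      qed
      show "ch y1 y2 \<in> cball c r"
        if "r \<le> d" "y1 \<in> S" "y2 \<in> S" "y1 \<in> cball c r" "y2 \<in> cball c r" for c r y1 y2
        by (rule ch_ball[OF that])
    qed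
  qed
  show "weakly_convex_on (A \<inter> cball x d1) (diameter (A \<inter> cball x d1)) \<and>
     (\<forall>\<epsilon>. 0 \<le> \<epsilon> \<and> \<epsilon> < diameter (A \<inter> cball x d1) \<longrightarrow>
        modnonconv (A \<inter> cball x d1) \<epsilon> \<le> modnonconv A \<epsilon>) \<and>
     path_connected (A \<inter> cball x d1)"
    using partB partC pc by (simp add: S_def)
qed

end
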